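(* Let $T\in D(\nu)$ and $\lambda_1\in\mathcal P$. Then $\lambda(\lambda_1),\alpha(\lambda_1)\in\mathcal P^k$ and $T\in\underline{\mathrm{CLR}}^{\lambda(\lambda_1)}_{\alpha(\lambda_1),\nu}$ if and only if $\lambda_1\ge\lambda_{\min}(T)$.
   Context: Identify a partition $\lambda=(a_1\ge a_2\ge\cdots)$ with $\sum_ja_j\epsilon_j$ in $\Lambda=\bigoplus_{j\ge1}\mathbb Z\epsilon_j$; put $\omega_i=\epsilon_1+\dots+\epsilon_i$; partitions are exactly elements of $\Lambda$ with all $\omega$-coordinates $\ge0$. For $x,y\in\Lambda$, $y\le x$ means $x-y$ has all $\omega$-coordinates $\ge0$. $\mathcal P$ = partitions, $\mathcal P^k$ = $k$-tuples of partitions. $SST(\nu)$ = semistandard tableaux of shape $\nu$ with entries in $\mathbb Z_{>0}$, with the standard $\mathfrak{gl}_\infty$-crystal structure (operators $\tilde e_i$). For $T\in SST(\nu)$: $\mathrm{wt}(T)=\sum_j(\#\text{entries }j)\epsilon_j$, $\varepsilon_i(T)=\max\{m\ge0:\tilde e_i^mT\ne0\}$, $\varepsilon(T)=\sum_i\varepsilon_i(T)\omega_i$. $\mathrm{CLR}^\lambda_{\alpha,\nu}=\{T\in SST(\nu):\varepsilon(T)\le\alpha,\ \alpha+\mathrm{wt}(T)=\lambda\}$. Fix $k\ge1$ and partitions $\nu=(\nu_1^+,\nu_1^-,\dots,\nu_k^+,\nu_k^-)$; indices cyclic mod $k$ ($\lambda_0:=\lambda_k$). $\underline{SST}(\nu)=\prod_iSST(\nu_i^+)\times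 SST(\nu_i^-)$, elements $T=(T_1^+,T_1^-,\dots,T_k^+,T_k^-)$, $T_i=(T_i^+,T_i^-)$, $\mathrm{wt}(T_i)=\mathrm{wt}(T_i^+)-\mathrm{wt}(T_i^-)$. $\underline{\mathrm{CLR}}^\lambda_{\alpha,\nu}=\prod_{i=1}^k\mathrm{CLR}^{\lambda_i}_{\alpha_i,\nu_i^+}\times\mathrm{CLR}^{\lambda_{i-1}}_{\alpha_i,\nu_i^-}$ for $\lambda,\alpha\in\mathcal P^k$. $T$ is distinguished if it lies in some $\underline{\mathrm{CLR}}^\lambda_{\alpha,\nu}$; $D(\nu)$ is the set of distinguished $T$ (equivalently those with $\sum_j\mathrm{wt}(T_j)=0$). For $T\in\underline{SST}(\nu)$ and $\lambda_1\in\mathcal P$, $\lambda(\lambda_1)=(\lambda_1,\dots,\lambda_k)$ and $\alpha(\lambda_1)=(\alpha_1,\dots,\alpha_k)$ are the elements of $\Lambda^k$ given by $\lambda_i=\lambda_1+\sum_{j=2}^i\mathrm{wt}(T_j)$, $\alpha_i=\lambda_1-\mathrm{wt}(T_i^+)+\sum_{j=2}^i\mathrm{wt}(T_j)$. For $T\in D(\nu)$, $\lambda_{\min}(T)\in\Lambda$ is the least upper bound with respect to $\le$ (coordinatewise maximum of $\omega$-coordinates) of the $2k$ elements $S_i^\pm=\varepsilon(T_i^\pm)+\mathrm{wt}(T_i^+)-\sum_{j=2}^i\mathrm{wt}(T_j)$, $i=1,\dots,k$; it is a partition. *)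

theory Defs
  imports Main
begin

text \<open>Elements of Lambda = direct sum of Z eps_j (j >= 1) are functions nat => int,
  index j stands for eps_j; index 0 is unused (forced to be 0).\<close>

type_synonym lam = "nat \<Rightarrow> int"
text \<open>Tableaux: list of rows (top to bottom, English convention), each row a list of entries.\<close>
type_synonym tab = "nat list list"

definition in_Lambda :: "lam \<Rightarrow> bool" where
  "in_Lambda x \<longleftrightarrow> x 0 = 0 \<and> finite {j. x j \<noteq> 0}"

text \<open>omega-coordinates: x = sum_i c_i omega_i with c_i = x_i - x_(i+1).\<close>
definition omega_coord :: "lam \<Rightarrow> nat \<Rightarrow> int" where
  "omega_coord x i = (if i = 0 then 0 else x i - x (Suc i))"

definition omega_le :: "lam \<Rightarrow> lam \<Rightarrow> bool" where
  "omega_le y x \<longleftrightarrow> (\<forall>i\<ge>1. omega_coord (\<lambda>j. x j - y j) i \<ge> 0)"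

definition is_part :: "lam \<Rightarrow> bool" where
  "is_part x \<longleftrightarrow> in_Lambda x \<and> (\<forall>i\<ge>1. omega_coord x i \<ge> 0)"

definition SST :: "lam \<Rightarrow> tab \<Rightarrow> bool" where
  "SST nu T \<longleftrightarrow>
     (\<forall>r. nu (Suc r) = (if r < length T then int (length (T ! r)) else 0))
   \<and> (\<forall>r<length T. T ! r \<noteq> [])
   \<and> (\<forall>r<length T. \<forall>c<length (T ! r). 0 < T ! r ! c)
   \<and> (\<forall>r<length T. sorted (T ! r))
   \<and> (\<forall>r c. Suc r < length T \<and> c < length (T ! Suc r) \<longrightarrow> T ! r ! c < T ! Suc r ! c)"

definition read_word :: "tab \<Rightarrow> nat list" where
  "read_word T = concat (rev T)"

text \<open>Signature (bracket) rule for e_i on words: letter i+1 is an opening bracket,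
  letter i a closing bracket; e_i changes the leftmost unmatched i+1 into i.\<close>
definition bal :: "nat \<Rightarrow> nat list \<Rightarrow> nat \<Rightarrow> nat \<Rightarrow> int" where
  "bal i w p q = int (count_list (take (Suc q - p) (drop p w)) (Suc i))
                - int (count_list (take (Suc q - p) (drop p w)) i)"

definition unmatched :: "nat \<Rightarrow> nat list \<Rightarrow> nat \<Rightarrow> bool" where
  "unmatched i w p \<longleftrightarrow> p < length w \<and> w ! p = Suc i
     \<and> (\<forall>q. p \<le> q \<and> q < length w \<longrightarrow> 0 < bal i w p q)"

definition e_word :: "nat \<Rightarrow> nat list \<Rightarrow> nat list option" where
  "e_word i w = (if \<exists>p. unmatched i w p
                 then Some (w[(LEAST p. unmatched i w p) := i]) else None)"

fun split_rows :: "nat list \<Rightarrow> 'a list \<Rightarrow> 'a list list" where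
  "split_rows [] w = []"
| "split_rows (n # ns) w = take n w # split_rows ns (drop n w)"

text \<open>Crystal operator e_i on tableaux (None represents 0).\<close>
definition e_tab :: "nat \<Rightarrow> tab \<Rightarrow> tab option" where
  "e_tab i T = map_option (\<lambda>w. rev (split_rows (map length (rev T)) w)) (e_word i (read_word T))"

primrec e_pow :: "nat \<Rightarrow> nat \<Rightarrow> tab \<Rightarrow> tab option" where
  "e_pow i 0 T = Some T"
| "e_pow i (Suc m) T = Option.bind (e_pow i m T) (e_tab i)"

definition eps_i :: "nat \<Rightarrow> tab \<Rightarrow> nat" where
  "eps_i i T = (GREATEST m. e_pow i m T \<noteq> None)"

text \<open>eps(T) = sum_{i>=1} eps_i(T) omega_i, in eps-coordinates.\<close>
definition eps_vec :: "tab \<Rightarrow> lam" where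
  "eps_vec T j = (if j = 0 then 0 else int (\<Sum>i\<in>{i. j \<le> i \<and> eps_i i T \<noteq> 0}. eps_i i T))"

definition wt :: "tab \<Rightarrow> lam" where
  "wt T j = (if j = 0 then 0 else int (count_list (concat T) j))"

definition CLR :: "lam \<Rightarrow> lam \<Rightarrow> lam \<Rightarrow> tab set" where
  "CLR la al nu = {T. SST nu T \<and> omega_le (eps_vec T) al \<and> (\<forall>j. al j + wt T j = la j)}"

text \<open>k-tuples indexed by 1..k, cyclic predecessor.\<close>
definition prevk :: "nat \<Rightarrow> nat \<Rightarrow> nat" where
  "prevk k i = (if i = 1 then k else i - 1)"

definition is_part_k :: "nat \<Rightarrow> (nat \<Rightarrow> lam) \<Rightarrow> bool" where
  "is_part_k k x \<longleftrightarrow> (\<forall>i\<in>{1..k}. is_part (x i))"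

definition uSST :: "nat \<Rightarrow> (nat \<Rightarrow> lam) \<Rightarrow> (nat \<Rightarrow> lam) \<Rightarrow> (nat \<Rightarrow> tab) \<Rightarrow> (nat \<Rightarrow> tab) \<Rightarrow> bool" where
  "uSST k nup num Tp Tm \<longleftrightarrow> (\<forall>i\<in>{1..k}. SST (nup i) (Tp i) \<and> SST (num i) (Tm i))"

definition uCLR :: "nat \<Rightarrow> (nat \<Rightarrow> lam) \<Rightarrow> (nat \<Rightarrow> lam) \<Rightarrow> (nat \<Rightarrow> lam) \<Rightarrow> (nat \<Rightarrow> lam)
                    \<Rightarrow> (nat \<Rightarrow> tab) \<Rightarrow> (nat \<Rightarrow> tab) \<Rightarrow> bool" where
  "uCLR k la al nup num Tp Tm \<longleftrightarrow>
     (\<forall>i\<in>{1..k}. Tp i \<in> CLR (la i) (al i) (nup i) \<and> Tm i \<in> CLR (la (prevk k i)) (al i) (num i))"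

definition distinguished :: "nat \<Rightarrow> (nat \<Rightarrow> lam) \<Rightarrow> (nat \<Rightarrow> lam) \<Rightarrow> (nat \<Rightarrow> tab) \<Rightarrow> (nat \<Rightarrow> tab) \<Rightarrow> bool" where
  "distinguished k nup num Tp Tm \<longleftrightarrow>
     (\<exists>la al. is_part_k k la \<and> is_part_k k al \<and> uCLR k la al nup num Tp Tm)"

definition wt_pair :: "(nat \<Rightarrow> tab) \<Rightarrow> (nat \<Rightarrow> tab) \<Rightarrow> nat \<Rightarrow> lam" where
  "wt_pair Tp Tm i j = wt (Tp i) j - wt (Tm i) j"

definition lam_of :: "(nat \<Rightarrow> tab) \<Rightarrow> (nat \<Rightarrow> tab) \<Rightarrow> lam \<Rightarrow> nat \<Rightarrow> lam" where
  "lam_of Tp Tm l1 i j = l1 j + (\<Sum>m\<in>{2..i}. wt_pair Tp Tm m j)"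

definition alpha_of :: "(nat \<Rightarrow> tab) \<Rightarrow> (nat \<Rightarrow> tab) \<Rightarrow> lam \<Rightarrow> nat \<Rightarrow> lam" where
  "alpha_of Tp Tm l1 i j = l1 j - wt (Tp i) j + (\<Sum>m\<in>{2..i}. wt_pair Tp Tm m j)"

definition S_plus :: "(nat \<Rightarrow> tab) \<Rightarrow> (nat \<Rightarrow> tab) \<Rightarrow> nat \<Rightarrow> lam" where
  "S_plus Tp Tm i j = eps_vec (Tp i) j + wt (Tp i) j - (\<Sum>m\<in>{2..i}. wt_pair Tp Tm m j)"

definition S_minus :: "(nat \<Rightarrow> tab) \<Rightarrow> (nat \<Rightarrow> tab) \<Rightarrow> nat \<Rightarrow> lam" where
  "S_minus Tp Tm i j = eps_vec (Tm i) j + wt (Tp i) j - (\<Sum>m\<in>{2..i}. wt_pair Tp Tm m j)"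

text \<open>Least upper bound: coordinatewise maximum of omega-coordinates of the 2k elements,
  converted back to eps-coordinates.\<close>
definition max_omega :: "nat \<Rightarrow> (nat \<Rightarrow> tab) \<Rightarrow> (nat \<Rightarrow> tab) \<Rightarrow> nat \<Rightarrow> int" where
  "max_omega k Tp Tm i = Max ((\<lambda>m. omega_coord (S_plus Tp Tm m) i) ` {1..k}
                             \<union> (\<lambda>m. omega_coord (S_minus Tp Tm m) i) ` {1..k})"

definition lambda_min :: "nat \<Rightarrow> (nat \<Rightarrow> tab) \<Rightarrow> (nat \<Rightarrow> tab) \<Rightarrow> lam" where
  "lambda_min k Tp Tm j = (if j = 0 then 0
      else (\<Sum>i\<in>{i. j \<le> i \<and> max_omega k Tp Tm i \<noteq> 0}. max_omega k Tp Tm i))"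

end

theory Submission imports Defs begin

definition Bs :: "nat \<Rightarrow> nat list \<Rightarrow> nat \<Rightarrow> int" where
  "Bs i w t = int (count_list (drop t w) (Suc i)) - int (count_list (drop t w) i)"

lemma Bs_step: "t < length w \<Longrightarrow> Bs i w t =
   (if w!t = Suc i then 1 else if w!t = i then -1 else 0) + Bs i w (Suc t)"
  unfolding Bs_def by (simp add: Cons_nth_drop_Suc[symmetric])

lemma Bs_len: "length w \<le> t \<Longrightarrow> Bs i w t = 0"
  unfolding Bs_def by simp

lemma count_concat_rev: "count_list (concat (rev T)) x = count_list (concat T) x"
  by (induction T) auto

lemma bal_Bs: "p \<le> q \<Longrightarrow> q < length w \<Longrightarrow> bal i w p q = Bs i w p - Bs i w (Suc q)"
proof -
  assume a: "p \<le> q" "q < length w"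
  have "drop p w = take (Suc q - p) (drop p w) @ drop (Suc q - p) (drop p w)" by (rule append_take_drop_id[symmetric])
  moreover have "drop (Suc q - p) (drop p w) = drop (Suc q) w" using a by simp
  ultimately have e: "drop p w = take (Suc q - p) (drop p w) @ drop (Suc q) w" by simp
  show ?thesis unfolding bal_def Bs_def
    by (subst (3 4) e) simp
qed

lemma unm_exists:
  assumes "t \<le> length w" "Bs i w t \<ge> int m + 1"
  shows "\<exists>s. unmatched i w s \<and> s < length w \<and> w!s = Suc i \<and> Bs i w (Suc s) = int m
     \<and> (\<forall>t'. s < t' \<and> t' \<le> length w \<longrightarrow> Bs i w t' \<le> int m)"
proof -
  define S where "S = {t. t \<le> length w \<and> Bs i w t \<ge> int m + 1}"
  have fin: "finite S" unfolding S_def by auto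
  have tS: "t \<in> S" using assms unfolding S_def by auto
  define s where "s = Max S"
  have sS: "s \<in> S" using fin tS unfolding s_def using Max_in by blast
  have smax: "\<And>t'. t' \<in> S \<Longrightarrow> t' \<le> s" using fin unfolding s_def by simp
  have big: "\<And>t'. s < t' \<Longrightarrow> t' \<le> length w \<Longrightarrow> Bs i w t' \<le> int m"
  proof -
    fix t' assume "s < t'" "t' \<le> length w"
    then have "t' \<notin> S" using smax by fastforce
    then show "Bs i w t' \<le> int m" using \<open>t' \<le> length w\<close> unfolding S_def by auto
  qed
  have sl: "s < length w"
  proof (rule ccontr)
    assume "\<not> s < length w"
    then have "Bs i w s = 0" by (simp add: Bs_len)
    with sS show False unfolding S_def by auto
  qed
  have st: "Bs i w s = (if w!s = Suc i then 1 else if w!s = i then -1 else 0) + Bs i w (Suc s)"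
    using sl Bs_step by blast
  have b1: "Bs i w (Suc s) \<le> int m" using big sl by auto
  have bs: "Bs i w s \<ge> int m + 1" using sS unfolding S_def by auto
  have ws: "w!s = Suc i" using st b1 bs by (auto split: if_splits)
  have bS: "Bs i w (Suc s) = int m" using st b1 bs ws by auto
  have "unmatched i w s"
    unfolding unmatched_def
  proof (intro conjI allI impI)
    fix q assume "s \<le> q \<and> q < length w"
    then have "bal i w s q = Bs i w s - Bs i w (Suc q)" using bal_Bs by auto
    moreover have "Bs i w (Suc q) \<le> int m" using big \<open>s \<le> q \<and> q < length w\<close> by auto
    ultimately show "0 < bal i w s q" using bs by auto
  qed (use sl ws in auto)
  then show ?thesis using sl ws bS big by blast
qed

lemma Bs_update_ge: "p < t \<Longrightarrow> Bs i (w[p:=x]) t = Bs i w t"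
  unfolding Bs_def by simp

lemma Bs_update_le:
  assumes "p < length w" "w!p = Suc i"
  shows "t \<le> p \<Longrightarrow> Bs i (w[p:=i]) t = Bs i w t - 2"
proof (induction "p - t" arbitrary: t)
  case 0
  then have tp: "t = p" by simp
  have "Bs i (w[p:=i]) p = -1 + Bs i (w[p:=i]) (Suc p)"
    using Bs_step[of p "w[p:=i]" i] assms by simp
  also have "\<dots> = -1 + Bs i w (Suc p)" by (simp add: Bs_update_ge)
  also have "Bs i w p = 1 + Bs i w (Suc p)" using Bs_step[of p w i] assms by simp
  ultimately show ?case using tp by simp
next
  case (Suc d)
  then have tp: "t < p" by simp
  have "Bs i (w[p:=i]) t = (if w!t = Suc i then 1 else if w!t = i then -1 else 0) + Bs i (w[p:=i]) (Suc t)"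
    using Bs_step[of t "w[p:=i]" i] assms tp by simp
  moreover have "Bs i (w[p:=i]) (Suc t) = Bs i w (Suc t) - 2"
    using Suc tp by simp
  moreover have "Bs i w t = (if w!t = Suc i then 1 else if w!t = i then -1 else 0) + Bs i w (Suc t)"
    using Bs_step[of t w i] assms tp by simp
  ultimately show ?case by simp
qed

lemma count_update: "p < length w \<Longrightarrow> w!p = y \<Longrightarrow> x \<noteq> y \<Longrightarrow>
   count_list (w[p:=x]) y + 1 = count_list w y"
proof (induction w arbitrary: p)
  case Nil then show ?case by simp
next
  case (Cons a w) then show ?case by (cases p) auto
qed

lemma e_word_Some: "e_word i w = Some w' \<Longrightarrow> length w' = length w \<and> count_list w' (Suc i) + 1 = count_list w (Suc i)"
proof -
  assume a: "e_word i w = Some w'"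
  then have ex: "\<exists>p. unmatched i w p" unfolding e_word_def by (auto split: if_splits)
  define p where "p = (LEAST p. unmatched i w p)"
  have up: "unmatched i w p" unfolding p_def using ex by (rule LeastI_ex)
  have w': "w' = w[p := i]" using a ex unfolding e_word_def p_def by auto
  show ?thesis using up count_update[of p w "Suc i" i] unfolding w' unmatched_def by auto
qed

lemma e_word_step:
  assumes "t \<le> length w" "Bs i w t \<ge> int m + 1"
  shows "\<exists>w'. e_word i w = Some w' \<and> (\<exists>t'\<le>length w'. Bs i w' t' \<ge> int m)"
proof -
  obtain s where s: "unmatched i w s" "s < length w" "w!s = Suc i" "Bs i w (Suc s) = int m"
    using unm_exists[OF assms] by blast
  have ex: "\<exists>p. unmatched i w p" using s by blast
  define p where "p = (LEAST p. unmatched i w p)"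
  have up: "unmatched i w p" unfolding p_def using ex by (rule LeastI_ex)
  have ps: "p \<le> s" unfolding p_def using s(1) by (rule Least_le)
  have pl: "p < length w" and wp: "w!p = Suc i" using up unfolding unmatched_def by auto
  have ew: "e_word i w = Some (w[p := i])" using ex unfolding e_word_def p_def by auto
  show ?thesis
  proof (cases "p < s")
    case True
    then have "Bs i (w[p:=i]) s = Bs i w s" by (rule Bs_update_ge)
    moreover have "Bs i w s = 1 + Bs i w (Suc s)" using Bs_step[of s w i] s by simp
    ultimately show ?thesis using ew s by (intro exI[of _ "w[p:=i]"]) (auto intro!: exI[of _ s])
  next
    case False
    then have "p = s" using ps by simp
    then have "Bs i (w[p:=i]) (Suc s) = int m" using Bs_update_ge[of p "Suc s"] s by simp
    then show ?thesis using ew s by (intro exI[of _ "w[p:=i]"]) (auto intro!: exI[of _ "Suc s"])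
  qed
qed

lemma concat_split_rows: "concat (split_rows ns w) = take (sum_list ns) w"
  by (induction ns arbitrary: w) (auto simp: take_add)

lemma e_tab_Some_iff:
  "e_tab i T = Some T' \<Longrightarrow> \<exists>w'. e_word i (read_word T) = Some w' \<and> read_word T' = w'"
  "e_word i (read_word T) = Some w' \<Longrightarrow> \<exists>T'. e_tab i T = Some T' \<and> read_word T' = w'"
proof -
  have L: "read_word (rev (split_rows (map length (rev T)) w')) = w'" if "e_word i (read_word T) = Some w'" for w'
  proof -
    have "length w' = length (read_word T)" using e_word_Some[OF that] by simp
    moreover have "sum_list (map length (rev T)) = length (read_word T)"
      unfolding read_word_def by (simp add: length_concat)
    ultimately show ?thesis unfolding read_word_def by (simp add: concat_split_rows)
  qed
  show "e_tab i T = Some T' \<Longrightarrow> \<exists>w'. e_word i (read_word T) = Some w' \<and> read_word T' = w'"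
    unfolding e_tab_def using L by auto
  show "e_word i (read_word T) = Some w' \<Longrightarrow> \<exists>T'. e_tab i T = Some T' \<and> read_word T' = w'"
    unfolding e_tab_def using L by auto
qed

lemma e_pow_Suc': "e_pow i (Suc m) T = Option.bind (e_tab i T) (e_pow i m)"
proof (induction m arbitrary: T)
  case 0 then show ?case by (cases "e_tab i T") auto
next
  case (Suc m)
  have "e_pow i (Suc (Suc m)) T = Option.bind (e_pow i (Suc m) T) (e_tab i)" by simp
  also have "\<dots> = Option.bind (e_tab i T) (\<lambda>y. Option.bind (e_pow i m y) (e_tab i))"
    using Suc by simp
  finally show ?case by simp
qed

lemma e_pow_upper: "e_pow i m T \<noteq> None \<Longrightarrow> m \<le> count_list (read_word T) (Suc i)"
proof (induction m arbitrary: T)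
  case 0 then show ?case by simp
next
  case (Suc m)
  have "Option.bind (e_tab i T) (e_pow i m) \<noteq> None" using Suc.prems e_pow_Suc' by metis
  then obtain T' where T': "e_tab i T = Some T'" "e_pow i m T' \<noteq> None"
    by (cases "e_tab i T") auto
  obtain w' where w': "e_word i (read_word T) = Some w'" "read_word T' = w'"
    using e_tab_Some_iff(1)[OF T'(1)] by blast
  have "m \<le> count_list w' (Suc i)" using Suc.IH T'(2) w'(2) by blast
  then show ?case using e_word_Some[OF w'(1)] by simp
qed

lemma e_pow_lower: "t \<le> length (read_word T) \<Longrightarrow> Bs i (read_word T) t \<ge> int m \<Longrightarrow> e_pow i m T \<noteq> None"
proof (induction m arbitrary: T t)
  case 0 then show ?case by simp
next
  case (Suc m)
  have "Bs i (read_word T) t \<ge> int m + 1" using Suc.prems(2) by simp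
  from e_word_step[OF Suc.prems(1) this]
  obtain w' t' where w': "e_word i (read_word T) = Some w'" "t' \<le> length w'" "Bs i w' t' \<ge> int m"
    by auto
  obtain T' where T': "e_tab i T = Some T'" "read_word T' = w'"
    using e_tab_Some_iff(2)[OF w'(1)] by blast
  have "e_pow i m T' \<noteq> None" using Suc.IH[of t' T'] w' T' by simp
  then show ?case using T' e_pow_Suc'[of i m T] by simp
qed

lemma eps_i_upper: "eps_i i T \<le> count_list (read_word T) (Suc i)"
proof -
  have "e_pow i (GREATEST m. e_pow i m T \<noteq> None) T \<noteq> None"
    by (rule GreatestI_nat[where k=0 and b="count_list (read_word T) (Suc i)"]) (auto intro: e_pow_upper)
  then show ?thesis unfolding eps_i_def by (rule e_pow_upper)
qed

lemma eps_i_lower: "e_pow i m T \<noteq> None \<Longrightarrow> m \<le> eps_i i T"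
  unfolding eps_i_def by (rule Greatest_le_nat[where b="count_list (read_word T) (Suc i)"]) (auto intro: e_pow_upper)

lemma crystal: "int (count_list (concat T) (Suc i)) - int (count_list (concat T) i) \<le> int (eps_i i T)"
proof -
  have B0: "Bs i (read_word T) 0 = int (count_list (concat T) (Suc i)) - int (count_list (concat T) i)"
    unfolding Bs_def read_word_def by (simp add: count_concat_rev)
  show ?thesis
  proof (cases "Bs i (read_word T) 0 \<le> 0")
    case True then show ?thesis using B0 by simp
  next
    case False
    then have "Bs i (read_word T) 0 \<ge> int (nat (Bs i (read_word T) 0))" by simp
    then have "e_pow i (nat (Bs i (read_word T) 0)) T \<noteq> None" by (intro e_pow_lower) auto
    then have "nat (Bs i (read_word T) 0) \<le> eps_i i T" by (rule eps_i_lower)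
    then show ?thesis using B0 False by simp
  qed
qed

definition fs :: "lam \<Rightarrow> bool" where "fs x \<longleftrightarrow> finite {j. x j \<noteq> 0}"

lemma sum_tail:
  fixes f :: "nat \<Rightarrow> 'a::comm_monoid_add"
  assumes "finite {x. f x \<noteq> 0}"
  shows "(\<Sum>x\<in>{x. j \<le> x \<and> f x \<noteq> 0}. f x) = f j + (\<Sum>x\<in>{x. Suc j \<le> x \<and> f x \<noteq> 0}. f x)"
proof (cases "f j = 0")
  case True
  then have "{x. j \<le> x \<and> f x \<noteq> 0} = {x. Suc j \<le> x \<and> f x \<noteq> 0}"
    using Suc_le_eq le_less by fastforce
  then show ?thesis using True by simp
next
  case False
  then have e: "{x. j \<le> x \<and> f x \<noteq> 0} = insert j {x. Suc j \<le> x \<and> f x \<noteq> 0}"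
    by (auto simp: Suc_le_eq le_less)
  have "finite {x. Suc j \<le> x \<and> f x \<noteq> 0}" by (rule finite_subset[OF _ assms]) auto
  then show ?thesis unfolding e by (subst sum.insert) auto
qed

lemma eps_fin: "finite {i. eps_i i T \<noteq> 0}"
proof (rule finite_subset)
  show "{i. eps_i i T \<noteq> 0} \<subseteq> Suc -` set (read_word T)"
  proof
    fix i assume "i \<in> {i. eps_i i T \<noteq> 0}"
    then have "count_list (read_word T) (Suc i) \<noteq> 0" using eps_i_upper[of i T] by auto
    then show "i \<in> Suc -` set (read_word T)" by (metis count_list_0_iff vimage_eq)
  qed
  show "finite (Suc -` set (read_word T))" by (rule finite_vimageI) auto
qed

lemma omega_eps: "1 \<le> i \<Longrightarrow> omega_coord (eps_vec T) i = int (eps_i i T)"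
  unfolding omega_coord_def eps_vec_def using sum_tail[OF eps_fin, of T i] by simp

lemma fs_eps: "fs (eps_vec T)"
  unfolding fs_def
proof (rule finite_subset)
  show "{j. eps_vec T j \<noteq> 0} \<subseteq> (\<Union>i\<in>{i. eps_i i T \<noteq> 0}. {..i})"
  proof
    fix j assume "j \<in> {j. eps_vec T j \<noteq> 0}"
    then have "{i. j \<le> i \<and> eps_i i T \<noteq> 0} \<noteq> {}"
    proof (intro notI)
      assume "j \<in> {j. eps_vec T j \<noteq> 0}" and e: "{i. j \<le> i \<and> eps_i i T \<noteq> 0} = {}"
      then show False unfolding eps_vec_def mem_Collect_eq e sum.empty by (simp split: if_splits)
    qed
    then show "j \<in> (\<Union>i\<in>{i. eps_i i T \<noteq> 0}. {..i})" by auto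
  qed
  show "finite (\<Union>i\<in>{i. eps_i i T \<noteq> 0}. {..i})" using eps_fin by auto
qed

lemma fs_wt: "fs (wt T)"
  unfolding fs_def
proof (rule finite_subset[of _ "set (concat T)"])
  show "{j. wt T j \<noteq> 0} \<subseteq> set (concat T)"
  proof
    fix j assume "j \<in> {j. wt T j \<noteq> 0}"
    then have "count_list (concat T) j \<noteq> 0" unfolding wt_def by (auto split: if_splits)
    then show "j \<in> set (concat T)" by (metis count_list_0_iff)
  qed
qed auto

lemma fs_diff: "fs a \<Longrightarrow> fs b \<Longrightarrow> fs (\<lambda>j. a j - b j)"
  unfolding fs_def by (rule finite_subset[of _ "{j. a j \<noteq> 0} \<union> {j. b j \<noteq> 0}"]) auto

lemma fs_add: "fs a \<Longrightarrow> fs b \<Longrightarrow> fs (\<lambda>j. a j + b j)"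
  unfolding fs_def by (rule finite_subset[of _ "{j. a j \<noteq> 0} \<union> {j. b j \<noteq> 0}"]) auto

lemma fs_sum: "finite I \<Longrightarrow> (\<forall>m\<in>I. fs (f m)) \<Longrightarrow> fs (\<lambda>j. \<Sum>m\<in>I. f m j)"
  unfolding fs_def
proof (rule finite_subset[of _ "\<Union>m\<in>I. {j. f m j \<noteq> 0}"])
  show "{j. (\<Sum>m\<in>I. f m j) \<noteq> 0} \<subseteq> (\<Union>m\<in>I. {j. f m j \<noteq> 0})"
  proof
    fix j assume "j \<in> {j. (\<Sum>m\<in>I. f m j) \<noteq> 0}"
    then show "j \<in> (\<Union>m\<in>I. {j. f m j \<noteq> 0})" by (metis (mono_tags, lifting) UN_iff mem_Collect_eq sum.neutral)
  qed
qed auto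

lemma fin_omega: "fs x \<Longrightarrow> finite {i. omega_coord x i \<noteq> 0}"
  unfolding fs_def
proof (rule finite_subset[of _ "{j. x j \<noteq> 0} \<union> Suc -` {j. x j \<noteq> 0}"])
  assume "finite {j. x j \<noteq> 0}"
  moreover have "finite (Suc -` {j. x j \<noteq> 0})" using calculation by (intro finite_vimageI) auto
  ultimately show "finite ({j. x j \<noteq> 0} \<union> Suc -` {j. x j \<noteq> 0})" by blast
qed (auto simp: omega_coord_def split: if_splits)

lemma fs_wt_pair: "fs (wt_pair Tp Tm m)"
  unfolding wt_pair_def by (rule fs_diff[OF fs_wt fs_wt])

lemma fs_Ssum: "fs (\<lambda>j. \<Sum>m\<in>{2..i}. wt_pair Tp Tm m j)"
  by (rule fs_sum) (auto simp: fs_wt_pair)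

lemma fs_S_plus: "fs (S_plus Tp Tm i)"
proof -
  have "S_plus Tp Tm i = (\<lambda>j. (eps_vec (Tp i) j + wt (Tp i) j) - (\<Sum>m\<in>{2..i}. wt_pair Tp Tm m j))"
    unfolding S_plus_def by auto
  then show ?thesis using fs_diff[OF fs_add[OF fs_eps fs_wt] fs_Ssum] by metis
qed

lemma fs_S_minus: "fs (S_minus Tp Tm i)"
proof -
  have "S_minus Tp Tm i = (\<lambda>j. (eps_vec (Tm i) j + wt (Tp i) j) - (\<Sum>m\<in>{2..i}. wt_pair Tp Tm m j))"
    unfolding S_minus_def by auto
  then show ?thesis using fs_diff[OF fs_add[OF fs_eps fs_wt] fs_Ssum] by metis
qed

lemma mo_fin:
  assumes "1 \<le> k"
  shows "finite {i. max_omega k Tp Tm i \<noteq> 0}"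
proof (rule finite_subset)
  show "{i. max_omega k Tp Tm i \<noteq> 0} \<subseteq>
    (\<Union>m\<in>{1..k}. {i. omega_coord (S_plus Tp Tm m) i \<noteq> 0} \<union> {i. omega_coord (S_minus Tp Tm m) i \<noteq> 0})"
  proof
    fix i assume a: "i \<in> {i. max_omega k Tp Tm i \<noteq> 0}"
    show "i \<in> (\<Union>m\<in>{1..k}. {i. omega_coord (S_plus Tp Tm m) i \<noteq> 0} \<union> {i. omega_coord (S_minus Tp Tm m) i \<noteq> 0})"
    proof (rule ccontr)
      assume "\<not> ?thesis"
      then have z: "\<forall>m\<in>{1..k}. omega_coord (S_plus Tp Tm m) i = 0 \<and> omega_coord (S_minus Tp Tm m) i = 0" by auto
      have "((\<lambda>m. omega_coord (S_plus Tp Tm m) i) ` {1..k} \<union> (\<lambda>m. omega_coord (S_minus Tp Tm m) i) ` {1..k}) = {0}"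
        using z assms by force
      then have "max_omega k Tp Tm i = 0" unfolding max_omega_def by simp
      then show False using a by simp
    qed
  qed
  show "finite (\<Union>m\<in>{1..k}. {i. omega_coord (S_plus Tp Tm m) i \<noteq> 0} \<union> {i. omega_coord (S_minus Tp Tm m) i \<noteq> 0})"
    using fin_omega[OF fs_S_plus] fin_omega[OF fs_S_minus] by auto
qed

lemma omega_lmin: "1 \<le> k \<Longrightarrow> 1 \<le> i \<Longrightarrow> omega_coord (lambda_min k Tp Tm) i = max_omega k Tp Tm i"
  unfolding omega_coord_def lambda_min_def using sum_tail[OF mo_fin, of k Tp Tm i] by simp

lemma mo_le: "1 \<le> k \<Longrightarrow> max_omega k Tp Tm i \<le> c \<longleftrightarrow>
   (\<forall>m\<in>{1..k}. omega_coord (S_plus Tp Tm m) i \<le> c \<and> omega_coord (S_minus Tp Tm m) i \<le> c)"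
  unfolding max_omega_def by (subst Max_le_iff) auto

theorem mainTheorem9:
  fixes k :: nat and nup num :: "nat \<Rightarrow> lam" and Tp Tm :: "nat \<Rightarrow> tab" and l1 :: lam
  assumes "1 \<le> k"
    and "\<forall>i\<in>{1..k}. is_part (nup i) \<and> is_part (num i)"
    and "distinguished k nup num Tp Tm"
    and "is_part l1"
  shows "(is_part_k k (lam_of Tp Tm l1) \<and> is_part_k k (alpha_of Tp Tm l1)
          \<and> uCLR k (lam_of Tp Tm l1) (alpha_of Tp Tm l1) nup num Tp Tm)
         \<longleftrightarrow> omega_le (lambda_min k Tp Tm) l1"
proof -
  have k1: "1 \<le> k" by (rule assms(1))
  obtain la al where U: "uCLR k la al nup num Tp Tm" using assms(3) unfolding distinguished_def by blast
  have U1: "\<And>i. i \<in> {1..k} \<Longrightarrow> SST (nup i) (Tp i) \<and> SST (num i) (Tm i)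
      \<and> (\<forall>j. al i j + wt (Tp i) j = la i j) \<and> (\<forall>j. al i j + wt (Tm i) j = la (prevk k i) j)"
    using U unfolding uCLR_def CLR_def by auto
  have tel: "\<And>i j. 1 \<le> i \<Longrightarrow> i \<le> k \<Longrightarrow> la i j = la 1 j + (\<Sum>m\<in>{2..i}. wt_pair Tp Tm m j)"
  proof -
    fix i j show "1 \<le> i \<Longrightarrow> i \<le> k \<Longrightarrow> la i j = la 1 j + (\<Sum>m\<in>{2..i}. wt_pair Tp Tm m j)"
    proof (induction i)
      case 0 thus ?case by simp
    next
      case (Suc i)
      show ?case
      proof (cases "i = 0")
        case True thus ?thesis by simp
      next
        case False
        have u: "al (Suc i) j + wt (Tp (Suc i)) j = la (Suc i) j" "al (Suc i) j + wt (Tm (Suc i)) j = la i j"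
          using U1[of "Suc i"] Suc.prems False unfolding prevk_def by auto
        have ih: "la i j = la 1 j + (\<Sum>m\<in>{2..i}. wt_pair Tp Tm m j)" using Suc False by simp
        have "{2..Suc i} = insert (Suc i) {2..i}" using False by auto
        then have "(\<Sum>m\<in>{2..Suc i}. wt_pair Tp Tm m j) = wt_pair Tp Tm (Suc i) j + (\<Sum>m\<in>{2..i}. wt_pair Tp Tm m j)"
          by simp
        then show ?thesis using u ih unfolding wt_pair_def by simp
      qed
    qed
  qed
  have cyc: "\<And>j. wt_pair Tp Tm 1 j + (\<Sum>m\<in>{2..k}. wt_pair Tp Tm m j) = 0"
  proof -
    fix j
    have u: "al 1 j + wt (Tp 1) j = la 1 j" "al 1 j + wt (Tm 1) j = la k j"
      using U1[of 1] k1 unfolding prevk_def by auto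
    show "wt_pair Tp Tm 1 j + (\<Sum>m\<in>{2..k}. wt_pair Tp Tm m j) = 0"
      using tel[of k j] k1 u unfolding wt_pair_def by simp
  qed
  have idA: "\<And>i j. alpha_of Tp Tm l1 i j = l1 j - S_plus Tp Tm i j + eps_vec (Tp i) j"
    unfolding alpha_of_def S_plus_def by simp
  have idB: "\<And>i j. alpha_of Tp Tm l1 i j = l1 j - S_minus Tp Tm i j + eps_vec (Tm i) j"
    unfolding alpha_of_def S_minus_def by simp
  have idC: "\<And>i j. lam_of Tp Tm l1 i j = alpha_of Tp Tm l1 i j + wt (Tp i) j"
    unfolding alpha_of_def lam_of_def by simp
  have idD: "\<And>i j. i \<in> {1..k} \<Longrightarrow> alpha_of Tp Tm l1 i j + wt (Tm i) j = lam_of Tp Tm l1 (prevk k i) j"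
  proof -
    fix i j assume i: "i \<in> {1..k}"
    show "alpha_of Tp Tm l1 i j + wt (Tm i) j = lam_of Tp Tm l1 (prevk k i) j"
    proof (cases "i = 1")
      case True
      then show ?thesis using cyc[of j] unfolding alpha_of_def lam_of_def prevk_def wt_pair_def by simp
    next
      case False
      then have "{2..i} = insert i {2..i-1}" using i by auto
      have "(\<Sum>m\<in>{2..i}. wt_pair Tp Tm m j) = wt_pair Tp Tm i j + (\<Sum>m\<in>{2..i-1}. wt_pair Tp Tm m j)"
      proof -
        have "i \<notin> {2..i-1}" using i by auto
        then show ?thesis using \<open>{2..i} = insert i {2..i-1}\<close> by simp
      qed
      then show ?thesis using False unfolding alpha_of_def lam_of_def prevk_def wt_pair_def by simp
    qed
  qed
  define P where "P = (\<forall>m\<in>{1..k}. \<forall>i\<ge>1. omega_coord (S_plus Tp Tm m) i \<le> omega_coord l1 i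
                              \<and> omega_coord (S_minus Tp Tm m) i \<le> omega_coord l1 i)"
  have leA: "\<And>m. omega_le (eps_vec (Tp m)) (alpha_of Tp Tm l1 m) \<longleftrightarrow>
      (\<forall>i\<ge>1. omega_coord (S_plus Tp Tm m) i \<le> omega_coord l1 i)"
    by (auto simp: omega_le_def omega_coord_def idA)
  have leB: "\<And>m. omega_le (eps_vec (Tm m)) (alpha_of Tp Tm l1 m) \<longleftrightarrow>
      (\<forall>i\<ge>1. omega_coord (S_minus Tp Tm m) i \<le> omega_coord l1 i)"
    by (auto simp: omega_le_def omega_coord_def idB)
  have ucl: "uCLR k (lam_of Tp Tm l1) (alpha_of Tp Tm l1) nup num Tp Tm \<longleftrightarrow> P"
    unfolding uCLR_def CLR_def P_def using U1 idC idD leA leB by (auto simp: add.commute)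
  have lmin: "omega_le (lambda_min k Tp Tm) l1 \<longleftrightarrow> P"
  proof -
    have "omega_le (lambda_min k Tp Tm) l1 \<longleftrightarrow> (\<forall>i\<ge>1. max_omega k Tp Tm i \<le> omega_coord l1 i)"
    proof -
      have e: "\<And>i. i \<ge> 1 \<Longrightarrow> lambda_min k Tp Tm i - lambda_min k Tp Tm (Suc i) = max_omega k Tp Tm i"
        using omega_lmin[OF k1] unfolding omega_coord_def by (metis not_one_le_zero)
      show ?thesis unfolding omega_le_def omega_coord_def
      proof (intro iffI allI impI)
        fix i :: nat assume a: "\<forall>i\<ge>1. 0 \<le> (if i = 0 then 0 else l1 i - lambda_min k Tp Tm i - (l1 (Suc i) - lambda_min k Tp Tm (Suc i)))"
          and i: "1 \<le> i"
        then show "max_omega k Tp Tm i \<le> (if i = 0 then 0 else l1 i - l1 (Suc i))" using e[OF i] by auto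
      next
        fix i :: nat assume a: "\<forall>i\<ge>1. max_omega k Tp Tm i \<le> (if i = 0 then 0 else l1 i - l1 (Suc i))"
          and i: "1 \<le> i"
        then show "0 \<le> (if i = 0 then 0 else l1 i - lambda_min k Tp Tm i - (l1 (Suc i) - lambda_min k Tp Tm (Suc i)))"
          using e[OF i] by auto
      qed
    qed
    then show ?thesis unfolding P_def using mo_le[OF k1] by auto
  qed
  have parts: "P \<Longrightarrow> is_part_k k (lam_of Tp Tm l1) \<and> is_part_k k (alpha_of Tp Tm l1)"
  proof -
    assume p: P
    have l0: "l1 0 = 0" and lfs: "fs l1" and lc: "\<And>i. i \<ge> 1 \<Longrightarrow> omega_coord l1 i \<ge> 0"
      using assms(4) unfolding is_part_def in_Lambda_def fs_def by auto
    have w0: "\<And>T. wt T 0 = 0" unfolding wt_def by simp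
    have afs: "fs (alpha_of Tp Tm l1 m)" for m
    proof -
      have "alpha_of Tp Tm l1 m = (\<lambda>j. (l1 j - wt (Tp m) j) + (\<Sum>m\<in>{2..m}. wt_pair Tp Tm m j))"
        unfolding alpha_of_def by auto
      then show ?thesis using fs_add[OF fs_diff[OF lfs fs_wt] fs_Ssum] by metis
    qed
    have a0: "alpha_of Tp Tm l1 m 0 = 0" for m unfolding alpha_of_def wt_pair_def using l0 w0 by simp
    have pa: "is_part (alpha_of Tp Tm l1 m) \<and> is_part (lam_of Tp Tm l1 m)" if m: "m \<in> {1..k}" for m
    proof -
      have cA: "omega_coord (alpha_of Tp Tm l1 m) i \<ge> 0" if i: "i \<ge> 1" for i
      proof -
        have "omega_coord (S_plus Tp Tm m) i \<le> omega_coord l1 i" using p m i unfolding P_def by auto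
        moreover have "omega_coord (eps_vec (Tp m)) i \<ge> 0" using omega_eps[OF i] by simp
        ultimately show ?thesis using i unfolding omega_coord_def idA by auto
      qed
      have cL: "omega_coord (lam_of Tp Tm l1 m) i \<ge> 0" if i: "i \<ge> 1" for i
      proof -
        have "omega_coord (S_plus Tp Tm m) i \<le> omega_coord l1 i" using p m i unfolding P_def by auto
        moreover have "omega_coord (eps_vec (Tp m)) i = int (eps_i i (Tp m))" using omega_eps[OF i] by simp
        moreover have "int (count_list (concat (Tp m)) (Suc i)) - int (count_list (concat (Tp m)) i) \<le> int (eps_i i (Tp m))"
          by (rule crystal)
        moreover have "wt (Tp m) i = int (count_list (concat (Tp m)) i)" "wt (Tp m) (Suc i) = int (count_list (concat (Tp m)) (Suc i))"
          using i unfolding wt_def by auto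
        ultimately show ?thesis using i unfolding omega_coord_def idC idA by auto
      qed
      have "fs (lam_of Tp Tm l1 m)"
      proof -
        have "lam_of Tp Tm l1 m = (\<lambda>j. alpha_of Tp Tm l1 m j + wt (Tp m) j)" using idC by auto
        then show ?thesis using fs_add[OF afs fs_wt] by metis
      qed
      moreover have "lam_of Tp Tm l1 m 0 = 0" using idC a0 w0 by simp
      ultimately show ?thesis using cA cL afs a0 unfolding is_part_def in_Lambda_def fs_def by auto
    qed
    then show ?thesis unfolding is_part_k_def by auto
  qed
  show ?thesis using ucl lmin parts by blast
qed

end
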